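(* Assume $A\in\mathbb{R}^{n\times n}$ is $(c_A,\gamma_{sys})$-SED and $B\in\mathbb{R}^{n\times m}$ is $(c_B,\gamma_{sys})$-SED, with $\gamma_{sys}>0$ and $c_A,c_B\ge1$. Let $\kappa\ge1$ and $K\in\mathcal{K}^\kappa$ be $(c_K,\gamma_{sys})$-SED and such that $A+BK$ is $(\tau,\rho)$-stable. Fix $i\in[N]$. Then the solution $P_i$ of the Lyapunov equation $$P_i = S_i + [K]_{i:}^\top [R]_{ii}[K]_{i:} + (A+BK)^\top P_i (A+BK)$$ is $(c_{P_i},\gamma_{P_i})$-SED away from $i$, where $$c_{P_i} = \frac{\|S_i + [K]_{i:}^\top [R]_{ii}[K]_{i:}\|\,\tau^2}{1-e^{-2\rho}} + 2\big(\|[S]_{ii}\| + \|[R]_{ii}\|\,c_K^2\big),\qquad \gamma_{P_i} = \frac{\rho\,\gamma_{sys}}{\rho + \ln(N c_A + N^2 c_B c_K)}.$$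
   Context: $\|\cdot\|$ denotes the Euclidean norm / induced $\ell_2$ matrix norm. There are $N$ agents $[N]=\{1,\dots,N\}$ on an undirected graph with graph distance $\mathrm{dist}$ (so $\mathrm{dist}(i,i)=0$, symmetric, triangle inequality). Agent $i$ has state dimension $n_i$ and input dimension $m_i$, $n=\sum_i n_i$, $m=\sum_i m_i$; matrices are partitioned into blocks $[X]_{lj}$ with row indices of agent $l$ and column indices of agent $j$ (using $n$- or $m$-partitions as appropriate); $[X]_{i:}$ denotes the block row of agent $i$. The $\kappa$-neighborhood of $i$ is $\mathcal{N}_i^\kappa=\{j\in[N]:\mathrm{dist}(i,j)<\kappa\}$, and $\mathcal{K}^\kappa=\{K\in\mathbb{R}^{m\times n}: [K]_{ij}=0 \text{ whenever } j\notin\mathcal{N}_i^\kappa\}$. $S\in\mathbb{R}^{n\times n}$ and $R\in\mathbb{R}^{m\times m}$ are block-diagonal with $[S]_{ii}\succeq0$, $[R]_{ii}\succ0$; $S_i\in\mathbb{R}^{n\times n}$ (resp. $R_i\in\mathbb{R}^{m\times m}$) is the matrix whose only nonzero block is the $(i,i)$ block, equal to $[S]_{ii}$ (resp. $[R]_{ii}$). Definition ($(\tau,\rho)$-stability): $X$ is $(\tau,\rho)$-stable ($\tau\ge1,\rho>0$) if $\|X^k\|\le\tau e^{-\rho k}$ for all integers $k\ge0$. Definition (SED): $X$ is $(c,\gamma)$-SED if $\|[X]_{lj}\|\le c\,e^{-\gamma\,\mathrm{dist}(l,j)}$ for all $l,j$. Definition (SED away from $i$): $X$ is $(c,\gamma)$-SED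 away from $i$ if $\|[X]_{lj}\|\le c\,e^{-\gamma\max(\mathrm{dist}(i,l),\mathrm{dist}(i,j))}$ for all $l,j$. *)

theory Defs
  imports Complex_Main
begin

text \<open>Agents are 0,...,N-1. A global index of an n-vector is a pair (agent i, local
  coordinate a) with a < ns i; similarly for m-vectors with ms. Matrices are
  functions of pairs of global indices; only entries on the index sets matter.\<close>

type_synonym idx = "nat \<times> nat"
type_synonym gmat = "idx \<Rightarrow> idx \<Rightarrow> real"

definition blk :: "(nat \<Rightarrow> nat) \<Rightarrow> nat \<Rightarrow> idx set" where
  "blk ds i = {i} \<times> {..<ds i}"

definition Idx :: "nat \<Rightarrow> (nat \<Rightarrow> nat) \<Rightarrow> idx set" where
  "Idx N ds = (SIGMA i:{..<N}. {..<ds i})"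

definition opnorm :: "idx set \<Rightarrow> idx set \<Rightarrow> gmat \<Rightarrow> real" where
  "opnorm I J M = Sup ((\<lambda>x. sqrt (\<Sum>r\<in>I. (\<Sum>c\<in>J. M r c * x c)\<^sup>2))
                        ` {x. (\<Sum>c\<in>J. (x c)\<^sup>2) \<le> 1})"

definition mmul :: "idx set \<Rightarrow> gmat \<Rightarrow> gmat \<Rightarrow> gmat" where
  "mmul K X Y = (\<lambda>r c. \<Sum>k\<in>K. X r k * Y k c)"

primrec mpow :: "idx set \<Rightarrow> gmat \<Rightarrow> nat \<Rightarrow> gmat" where
  "mpow I X 0 = (\<lambda>r c. if r = c then 1 else 0)"
| "mpow I X (Suc k) = mmul I X (mpow I X k)"

definition mtr :: "gmat \<Rightarrow> gmat" where
  "mtr X = (\<lambda>r c. X c r)"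

definition stable :: "idx set \<Rightarrow> gmat \<Rightarrow> real \<Rightarrow> real \<Rightarrow> bool" where
  "stable I X \<tau> \<rho> \<longleftrightarrow> \<tau> \<ge> 1 \<and> \<rho> > 0 \<and>
     (\<forall>k::nat. opnorm I I (mpow I X k) \<le> \<tau> * exp (- \<rho> * real k))"

definition SED :: "nat \<Rightarrow> (nat \<Rightarrow> nat \<Rightarrow> nat) \<Rightarrow> (nat \<Rightarrow> nat) \<Rightarrow> (nat \<Rightarrow> nat)
                    \<Rightarrow> gmat \<Rightarrow> real \<Rightarrow> real \<Rightarrow> bool" where
  "SED N d rd cd X c \<gamma> \<longleftrightarrow>
     (\<forall>l<N. \<forall>j<N. opnorm (blk rd l) (blk cd j) X \<le> c * exp (- \<gamma> * real (d l j)))"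

definition SED_away :: "nat \<Rightarrow> (nat \<Rightarrow> nat \<Rightarrow> nat) \<Rightarrow> (nat \<Rightarrow> nat) \<Rightarrow> (nat \<Rightarrow> nat)
                    \<Rightarrow> nat \<Rightarrow> gmat \<Rightarrow> real \<Rightarrow> real \<Rightarrow> bool" where
  "SED_away N d rd cd i X c \<gamma> \<longleftrightarrow>
     (\<forall>l<N. \<forall>j<N. opnorm (blk rd l) (blk cd j) X
                    \<le> c * exp (- \<gamma> * real (max (d i l) (d i j))))"

definition local_K :: "nat \<Rightarrow> (nat \<Rightarrow> nat \<Rightarrow> nat) \<Rightarrow> (nat \<Rightarrow> nat) \<Rightarrow> (nat \<Rightarrow> nat)
                        \<Rightarrow> real \<Rightarrow> gmat \<Rightarrow> bool" where
  "local_K N d ns ms \<kappa> K \<longleftrightarrow>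
     (\<forall>i<N. \<forall>j<N. \<not> (real (d i j) < \<kappa>) \<longrightarrow>
        (\<forall>r\<in>blk ms i. \<forall>c\<in>blk ns j. K r c = 0))"

definition block_diag :: "gmat \<Rightarrow> bool" where
  "block_diag X \<longleftrightarrow> (\<forall>r c. fst r \<noteq> fst c \<longrightarrow> X r c = 0)"

definition psd_on :: "idx set \<Rightarrow> gmat \<Rightarrow> bool" where
  "psd_on I X \<longleftrightarrow> (\<forall>r\<in>I. \<forall>c\<in>I. X r c = X c r) \<and>
     (\<forall>x. (\<Sum>r\<in>I. \<Sum>c\<in>I. x r * X r c * x c) \<ge> 0)"

definition pd_on :: "idx set \<Rightarrow> gmat \<Rightarrow> bool" where
  "pd_on I X \<longleftrightarrow> (\<forall>r\<in>I. \<forall>c\<in>I. X r c = X c r) \<and>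
     (\<forall>x. (\<exists>r\<in>I. x r \<noteq> 0) \<longrightarrow> (\<Sum>r\<in>I. \<Sum>c\<in>I. x r * X r c * x c) > 0)"

definition Sblock :: "gmat \<Rightarrow> nat \<Rightarrow> gmat" where
  "Sblock S i = (\<lambda>r c. if fst r = i \<and> fst c = i then S r c else 0)"

definition KRK :: "(nat \<Rightarrow> nat) \<Rightarrow> nat \<Rightarrow> gmat \<Rightarrow> gmat \<Rightarrow> gmat" where
  "KRK ms i K R = (\<lambda>r c. \<Sum>a\<in>blk ms i. \<Sum>b\<in>blk ms i. K a r * R a b * K b c)"

end

theory Submission
  imports Defs "HOL-Analysis.L2_Norm"
begin

definition app :: "idx set \<Rightarrow> gmat \<Rightarrow> (idx \<Rightarrow> real) \<Rightarrow> idx \<Rightarrow> real" where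
  "app J M x = (\<lambda>r. \<Sum>c\<in>J. M r c * x c)"

lemma opnorm_alt: "opnorm I J M = Sup ((\<lambda>x. L2_set (app J M x) I) ` {x. L2_set x J \<le> 1})"
proof -
  have "{x. (\<Sum>c\<in>J. (x c)\<^sup>2) \<le> 1} = {x. L2_set x J \<le> 1}"
    by (auto simp: L2_set_def)
  then show ?thesis unfolding opnorm_def app_def L2_set_def by simp
qed

lemma abs_le_L2: "finite J \<Longrightarrow> c \<in> J \<Longrightarrow> \<bar>x c\<bar> \<le> L2_set x J"
proof -
  assume "finite J" "c \<in> J"
  then have "\<bar>x c\<bar> \<le> L2_set (\<lambda>c. \<bar>x c\<bar>) J" by (rule member_le_L2_set)
  also have "\<dots> = L2_set x J" unfolding L2_set_def by simp
  finally show ?thesis .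
qed

lemma app_frob:
  assumes "finite I" "finite J"
  shows "L2_set (app J M x) I \<le> (\<Sum>r\<in>I. \<Sum>c\<in>J. \<bar>M r c\<bar>) * L2_set x J"
proof -
  have "L2_set (app J M x) I \<le> (\<Sum>r\<in>I. \<bar>app J M x r\<bar>)" by (rule L2_set_le_sum_abs)
  also have "\<dots> \<le> (\<Sum>r\<in>I. (\<Sum>c\<in>J. \<bar>M r c\<bar>) * L2_set x J)"
  proof (rule sum_mono)
    fix r assume "r \<in> I"
    have "\<bar>app J M x r\<bar> \<le> (\<Sum>c\<in>J. \<bar>M r c * x c\<bar>)" unfolding app_def by (rule sum_abs)
    also have "\<dots> \<le> (\<Sum>c\<in>J. \<bar>M r c\<bar> * L2_set x J)"
      by (rule sum_mono) (simp add: abs_mult abs_le_L2 assms mult_left_mono)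
    finally show "\<bar>app J M x r\<bar> \<le> (\<Sum>c\<in>J. \<bar>M r c\<bar>) * L2_set x J" by (simp add: sum_distrib_right)
  qed
  finally show ?thesis by (simp add: sum_distrib_right)
qed

lemma op_bdd: "finite I \<Longrightarrow> finite J \<Longrightarrow> bdd_above ((\<lambda>x. L2_set (app J M x) I) ` {x. L2_set x J \<le> 1})"
proof (rule bdd_aboveI2)
  fix x assume "finite I" "finite J" "x \<in> {x. L2_set x J \<le> 1}"
  then have "L2_set (app J M x) I \<le> (\<Sum>r\<in>I. \<Sum>c\<in>J. \<bar>M r c\<bar>) * L2_set x J" using app_frob by blast
  also have "\<dots> \<le> (\<Sum>r\<in>I. \<Sum>c\<in>J. \<bar>M r c\<bar>) * 1"
    using \<open>x \<in> _\<close> by (intro mult_left_mono) (auto intro!: sum_nonneg)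
  finally show "L2_set (app J M x) I \<le> (\<Sum>r\<in>I. \<Sum>c\<in>J. \<bar>M r c\<bar>)" by simp
qed

lemma op_upper1: "finite I \<Longrightarrow> finite J \<Longrightarrow> L2_set x J \<le> 1 \<Longrightarrow> L2_set (app J M x) I \<le> opnorm I J M"
  unfolding opnorm_alt by (rule cSup_upper) (auto intro: op_bdd)

lemma app_zero: "app J M (\<lambda>c. 0) = (\<lambda>r. 0)" by (simp add: app_def)

lemma op_nonneg: "finite I \<Longrightarrow> finite J \<Longrightarrow> 0 \<le> opnorm I J M"
  using op_upper1[of I J "\<lambda>c. 0" M] by (simp add: app_zero L2_set_def)

lemma app_scale: "app J M (\<lambda>c. a * x c) = (\<lambda>r. a * app J M x r)"
  by (simp add: app_def sum_distrib_left algebra_simps)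

lemma op_upper:
  assumes "finite I" "finite J"
  shows "L2_set (app J M x) I \<le> opnorm I J M * L2_set x J"
proof (cases "L2_set x J = 0")
  case True
  then have "\<forall>c\<in>J. x c = 0" using L2_set_eq_0_iff[OF assms(2)] by simp
  then have "app J M x = (\<lambda>r. 0)" by (simp add: app_def)
  then show ?thesis using True by (simp add: L2_set_def)
next
  case False
  define s where "s = L2_set x J"
  have s: "s > 0" using False s_def L2_set_nonneg[of x J] by linarith
  have "L2_set (\<lambda>c. (1/s) * x c) J = (1/s) * s" using L2_set_right_distrib[of "1/s" x J] s s_def by simp
  then have "L2_set (\<lambda>c. (1/s) * x c) J \<le> 1" using s by simp
  from op_upper1[OF assms this, of M] have "L2_set (\<lambda>r. (1/s) * app J M x r) I \<le> opnorm I J M"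
    by (simp only: app_scale)
  then have "(1/s) * L2_set (app J M x) I \<le> opnorm I J M"
    using L2_set_right_distrib[of "1/s" "app J M x" I] s by simp
  then show ?thesis using s s_def by (simp add: field_simps)
qed

lemma op_least:
  assumes "\<And>x. L2_set x J \<le> 1 \<Longrightarrow> L2_set (app J M x) I \<le> C"
  shows "opnorm I J M \<le> C"
  unfolding opnorm_alt
proof (rule cSup_least)
  show "(\<lambda>x. L2_set (app J M x) I) ` {x. L2_set x J \<le> 1} \<noteq> {}"
  proof -
    have "(\<lambda>c. 0) \<in> {x. L2_set x J \<le> 1}" by (simp add: L2_set_def)
    then show ?thesis by blast
  qed
qed (use assms in auto)

lemma op_le_by:
  assumes "C \<ge> 0" "\<And>x. L2_set (app J M x) I \<le> C * L2_set x J"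
  shows "opnorm I J M \<le> C"
proof (rule op_least)
  fix x assume "L2_set x J \<le> 1"
  then have "C * L2_set x J \<le> C * 1" using assms(1) by (intro mult_left_mono) auto
  then show "L2_set (app J M x) I \<le> C" using assms(2)[of x] by simp
qed

lemma op_cong:
  assumes "\<And>r c. r \<in> I \<Longrightarrow> c \<in> J \<Longrightarrow> M r c = M' r c"
  shows "opnorm I J M = opnorm I J M'"
proof -
  have "\<And>x. L2_set (app J M x) I = L2_set (app J M' x) I"
    by (rule L2_set_cong) (auto simp: app_def assms)
  then show ?thesis unfolding opnorm_alt by simp
qed


lemma app_mmul: "finite K \<Longrightarrow> app J (mmul K X Y) x = app K X (app J Y x)"
  unfolding app_def mmul_def
  by (auto simp: sum_distrib_left sum_distrib_right mult.assoc intro!: ext sum.swap)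

lemma op_mmul:
  assumes "finite I" "finite J" "finite L"
  shows "opnorm I L (mmul J X Y) \<le> opnorm I J X * opnorm J L Y"
proof (rule op_le_by)
  show "0 \<le> opnorm I J X * opnorm J L Y" using assms by (simp add: op_nonneg)
  fix x
  have "L2_set (app L (mmul J X Y) x) I = L2_set (app J X (app L Y x)) I" using assms by (simp add: app_mmul)
  also have "\<dots> \<le> opnorm I J X * L2_set (app L Y x) J" using assms by (simp add: op_upper)
  also have "\<dots> \<le> opnorm I J X * (opnorm J L Y * L2_set x L)"
    using assms by (intro mult_left_mono op_upper op_nonneg) auto
  finally show "L2_set (app L (mmul J X Y) x) I \<le> opnorm I J X * opnorm J L Y * L2_set x L" by simp
qed

lemma op_add:
  assumes "finite I" "finite J"
  shows "opnorm I J (\<lambda>r c. X r c + Y r c) \<le> opnorm I J X + opnorm I J Y"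
proof (rule op_le_by)
  show "0 \<le> opnorm I J X + opnorm I J Y" using assms by (simp add: op_nonneg)
  fix x
  have "app J (\<lambda>r c. X r c + Y r c) x = (\<lambda>r. app J X x r + app J Y x r)"
    by (simp add: app_def algebra_simps sum.distrib)
  then have "L2_set (app J (\<lambda>r c. X r c + Y r c) x) I \<le> L2_set (app J X x) I + L2_set (app J Y x) I"
    using L2_set_triangle_ineq by metis
  also have "\<dots> \<le> opnorm I J X * L2_set x J + opnorm I J Y * L2_set x J"
    using assms by (intro add_mono op_upper)
  finally show "L2_set (app J (\<lambda>r c. X r c + Y r c) x) I \<le> (opnorm I J X + opnorm I J Y) * L2_set x J"
    by (simp add: algebra_simps)
qed

lemma op_zero: "opnorm I J (\<lambda>r c. 0) \<le> 0"
  by (rule op_le_by) (auto simp: app_def L2_set_def)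

lemma op_sum:
  assumes "finite I" "finite J" "finite F"
  shows "opnorm I J (\<lambda>r c. \<Sum>k\<in>F. X k r c) \<le> (\<Sum>k\<in>F. opnorm I J (X k))"
  using assms(3)
proof (induction F rule: finite_induct)
  case empty
  then show ?case using op_zero by simp
next
  case (insert a F)
  have "opnorm I J (\<lambda>r c. \<Sum>k\<in>insert a F. X k r c) = opnorm I J (\<lambda>r c. X a r c + (\<Sum>k\<in>F. X k r c))"
    using insert by simp
  also have "\<dots> \<le> opnorm I J (X a) + opnorm I J (\<lambda>r c. \<Sum>k\<in>F. X k r c)"
    by (rule op_add[OF assms(1,2)])
  also have "\<dots> \<le> opnorm I J (X a) + (\<Sum>k\<in>F. opnorm I J (X k))" using insert by simp
  finally show ?case using insert by simp
qed

lemma L2_set_subset: "finite I \<Longrightarrow> I' \<subseteq> I \<Longrightarrow> L2_set f I' \<le> L2_set f I"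
  unfolding L2_set_def by (intro real_sqrt_le_mono sum_mono2) auto

lemma op_mono_sets:
  assumes "finite I" "finite J" "I' \<subseteq> I" "J' \<subseteq> J"
  shows "opnorm I' J' X \<le> opnorm I J X"
proof (rule op_le_by)
  show "0 \<le> opnorm I J X" using assms by (simp add: op_nonneg)
  fix x :: "idx \<Rightarrow> real"
  define x' where "x' = (\<lambda>c. if c \<in> J' then x c else 0)"
  have J'fin: "finite J'" using assms finite_subset by blast
  have "app J X x' = app J' X x"
    unfolding app_def x'_def using assms J'fin
    by (auto intro!: ext simp: if_distrib sum.If_cases Int_absorb1 cong: if_cong)
  moreover have "L2_set x' J = L2_set x J'"
  proof -
    have "(\<Sum>i\<in>J. (x' i)\<^sup>2) = (\<Sum>i\<in>J. if i \<in> J' then (x i)\<^sup>2 else 0)"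
      by (rule sum.cong) (auto simp: x'_def)
    also have "\<dots> = (\<Sum>i\<in>J'. (x i)\<^sup>2)" using assms by (simp add: sum.If_cases Int_absorb1)
    finally show ?thesis unfolding L2_set_def by simp
  qed
  moreover have "L2_set (app J' X x) I' \<le> L2_set (app J' X x) I" using assms by (simp add: L2_set_subset)
  moreover have "L2_set (app J X x') I \<le> opnorm I J X * L2_set x' J" using assms by (simp add: op_upper)
  ultimately show "L2_set (app J' X x) I' \<le> opnorm I J X * L2_set x J'" by simp
qed

lemma L2_sq: "(L2_set f A)\<^sup>2 = (\<Sum>i\<in>A. (f i)\<^sup>2)"
  unfolding L2_set_def by (simp add: sum_nonneg)

lemma op_mtr:
  assumes "finite I" "finite J"
  shows "opnorm J I (mtr X) \<le> opnorm I J X"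
proof (rule op_le_by)
  show "0 \<le> opnorm I J X" using assms by (simp add: op_nonneg)
  fix y
  define z where "z = app I (mtr X) y"
  have "(L2_set z J)\<^sup>2 = (\<Sum>c\<in>J. z c * z c)" unfolding L2_sq by (simp add: power2_eq_square)
  also have "\<dots> = (\<Sum>c\<in>J. (\<Sum>r\<in>I. X r c * y r) * z c)" by (simp add: z_def app_def mtr_def)
  also have "\<dots> = (\<Sum>r\<in>I. y r * app J X z r)"
    by (simp add: app_def sum_distrib_left sum_distrib_right mult.commute mult.left_commute sum.swap[of _ J I])
  also have "\<dots> \<le> (\<Sum>r\<in>I. \<bar>y r\<bar> * \<bar>app J X z r\<bar>)"
    by (rule sum_mono) (simp add: abs_mult[symmetric])
  also have "\<dots> \<le> L2_set y I * L2_set (app J X z) I" by (rule L2_set_mult_ineq)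
  also have "\<dots> \<le> L2_set y I * (opnorm I J X * L2_set z J)"
    using assms by (intro mult_left_mono op_upper) auto
  finally have *: "(L2_set z J)\<^sup>2 \<le> L2_set y I * (opnorm I J X * L2_set z J)" .
  show "L2_set (app I (mtr X) y) J \<le> opnorm I J X * L2_set y I"
  proof (cases "L2_set z J = 0")
    case True then show ?thesis using assms z_def by (simp add: op_nonneg)
  next
    case False
    then have pos: "L2_set z J > 0" using L2_set_nonneg[of z J] by linarith
    from * have "L2_set z J * L2_set z J \<le> (opnorm I J X * L2_set y I) * L2_set z J"
      by (simp add: power2_eq_square algebra_simps)
    then show ?thesis using pos z_def by simp
  qed
qed


definition qf :: "idx set \<Rightarrow> gmat \<Rightarrow> gmat \<Rightarrow> gmat" where
  "qf I X Y = (\<lambda>r c. \<Sum>a\<in>I. \<Sum>b\<in>I. X a r * Y a b * X b c)"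

lemma qf_mmul: "qf I X Y = mmul I (mmul I (mtr X) Y) X"
  unfolding qf_def mmul_def mtr_def
  by (auto intro!: ext simp: sum_distrib_right intro: sum.swap)

lemma op_qf:
  assumes "finite I'" "finite J" "finite L'"
  shows "opnorm I' L' (qf J X Y) \<le> opnorm J I' X * opnorm J J Y * opnorm J L' X"
proof -
  have "opnorm I' L' (qf J X Y) \<le> opnorm I' J (mmul J (mtr X) Y) * opnorm J L' X"
    unfolding qf_mmul using assms by (rule op_mmul)
  also have "\<dots> \<le> (opnorm I' J (mtr X) * opnorm J J Y) * opnorm J L' X"
    using assms by (intro mult_right_mono op_mmul op_nonneg) auto
  also have "\<dots> \<le> (opnorm J I' X * opnorm J J Y) * opnorm J L' X"
    using assms by (intro mult_right_mono op_mtr op_nonneg) (auto simp: op_nonneg)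
  finally show ?thesis by simp
qed

lemma qf_cong: "(\<And>a b. a \<in> I \<Longrightarrow> b \<in> I \<Longrightarrow> Y a b = Y' a b) \<Longrightarrow> qf I X Y = qf I X Y'"
  unfolding qf_def by (auto intro!: ext sum.cong)

lemma qf_add: "qf I X (\<lambda>a b. Y a b + Z a b) = (\<lambda>r c. qf I X Y r c + qf I X Z r c)"
  unfolding qf_def by (auto intro!: ext simp: algebra_simps sum.distrib)

lemma qf_sum: "qf I X (\<lambda>a b. \<Sum>k\<in>F. Y k a b) = (\<lambda>r c. \<Sum>k\<in>F. qf I X (Y k) r c)"
proof (intro ext)
  fix r c
  have "qf I X (\<lambda>a b. \<Sum>k\<in>F. Y k a b) r c = (\<Sum>a\<in>I. \<Sum>b\<in>I. \<Sum>k\<in>F. X a r * Y k a b * X b c)"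
    unfolding qf_def by (simp add: sum_distrib_left sum_distrib_right)
  also have "\<dots> = (\<Sum>a\<in>I. \<Sum>k\<in>F. \<Sum>b\<in>I. X a r * Y k a b * X b c)"
    by (intro sum.cong refl sum.swap)
  also have "\<dots> = (\<Sum>k\<in>F. \<Sum>a\<in>I. \<Sum>b\<in>I. X a r * Y k a b * X b c)"
    by (rule sum.swap)
  finally show "qf I X (\<lambda>a b. \<Sum>k\<in>F. Y k a b) r c = (\<Sum>k\<in>F. qf I X (Y k) r c)"
    unfolding qf_def .
qed

lemma qf_comp:
  "qf I X (qf I M Y) = qf I (mmul I M X) Y"
proof (intro ext)
  fix r c
  have "qf I X (qf I M Y) r c = (\<Sum>a\<in>I. \<Sum>b\<in>I. \<Sum>k\<in>I. \<Sum>l\<in>I. X a r * M k a * Y k l * M l b * X b c)"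
    unfolding qf_def by (simp add: sum_distrib_left sum_distrib_right mult_ac)
  also have "\<dots> = (\<Sum>a\<in>I. \<Sum>k\<in>I. \<Sum>b\<in>I. \<Sum>l\<in>I. X a r * M k a * Y k l * M l b * X b c)"
    by (rule sum.cong[OF refl], rule sum.swap)
  also have "\<dots> = (\<Sum>k\<in>I. \<Sum>a\<in>I. \<Sum>b\<in>I. \<Sum>l\<in>I. X a r * M k a * Y k l * M l b * X b c)"
    by (rule sum.swap)
  also have "\<dots> = (\<Sum>k\<in>I. \<Sum>a\<in>I. \<Sum>l\<in>I. \<Sum>b\<in>I. X a r * M k a * Y k l * M l b * X b c)"
    by (intro sum.cong refl sum.swap)
  also have "\<dots> = (\<Sum>k\<in>I. \<Sum>l\<in>I. \<Sum>a\<in>I. \<Sum>b\<in>I. X a r * M k a * Y k l * M l b * X b c)"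
    by (intro sum.cong refl sum.swap)
  also have "\<dots> = qf I (mmul I M X) Y r c"
    unfolding qf_def mmul_def by (simp add: sum_distrib_left sum_distrib_right mult_ac)
  finally show "qf I X (qf I M Y) r c = qf I (mmul I M X) Y r c" .
qed

lemma qf_id:
  assumes "finite I" "r \<in> I" "c \<in> I"
  shows "qf I (mpow I M 0) Y r c = Y r c"
proof -
  have "qf I (mpow I M 0) Y r c = (\<Sum>a\<in>I. if a = r then (\<Sum>b\<in>I. if b = c then Y a b else 0) else 0)"
    unfolding qf_def by (intro sum.cong refl) (auto intro: sum.cong)
  also have "\<dots> = (\<Sum>b\<in>I. if b = c then Y r b else 0)" using assms by (simp add: sum.delta')
  also have "\<dots> = Y r c" using assms by (simp add: sum.delta')
  finally show ?thesis .
qed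

lemma mpow_funpow: "(mmul I M ^^ k) (mpow I M j) = mpow I M (k + j)"
  by (induction k) auto

lemma lyap_iter:
  assumes lyap: "\<And>r c. r \<in> I \<Longrightarrow> c \<in> I \<Longrightarrow> P r c = Q r c + qf I M P r c"
  shows "qf I X P = (\<lambda>r c. (\<Sum>k<K. qf I ((mmul I M ^^ k) X) Q r c) + qf I ((mmul I M ^^ K) X) P r c)"
proof (induction K)
  case 0
  then show ?case by simp
next
  case (Suc K)
  define Y where "Y = (mmul I M ^^ K) X"
  have "qf I Y P = qf I Y (\<lambda>a b. Q a b + qf I M P a b)" by (rule qf_cong) (simp add: lyap)
  also have "\<dots> = (\<lambda>r c. qf I Y Q r c + qf I (mmul I M Y) P r c)" by (simp add: qf_add qf_comp)
  finally have "qf I Y P = (\<lambda>r c. qf I Y Q r c + qf I (mmul I M Y) P r c)" .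
  then show ?case using Suc by (auto intro!: ext simp: Y_def)
qed

lemma finite_blk[simp]: "finite (blk ds i)" by (simp add: blk_def)
lemma finite_Idx[simp]: "finite (Idx N ds)" by (simp add: Idx_def)
lemma blk_sub: "i < N \<Longrightarrow> blk ds i \<subseteq> Idx N ds" by (auto simp: blk_def Idx_def)

lemma Idx_blk: "Idx N ds = (\<Union>h\<in>{..<N}. blk ds h)" by (auto simp: blk_def Idx_def)

lemma mmul_blocks: "mmul (Idx N ds) X Y r c = (\<Sum>h<N. mmul (blk ds h) X Y r c)"
  unfolding Idx_blk mmul_def
  by (subst sum.UNION_disjoint) (auto simp: blk_def)

lemma op_mmul_blocks:
  assumes "finite I" "finite L"
  shows "opnorm I L (mmul (Idx N ds) X Y) \<le> (\<Sum>h<N. opnorm I (blk ds h) X * opnorm (blk ds h) L Y)"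
proof -
  have "mmul (Idx N ds) X Y = (\<lambda>r c. \<Sum>h<N. mmul (blk ds h) X Y r c)"
    by (intro ext) (rule mmul_blocks)
  then have "opnorm I L (mmul (Idx N ds) X Y) = opnorm I L (\<lambda>r c. \<Sum>h<N. mmul (blk ds h) X Y r c)"
    by simp
  also have "\<dots> \<le> (\<Sum>h<N. opnorm I L (mmul (blk ds h) X Y))" using assms by (intro op_sum) auto
  also have "\<dots> \<le> (\<Sum>h<N. opnorm I (blk ds h) X * opnorm (blk ds h) L Y)"
    using assms by (intro sum_mono op_mmul) auto
  finally show ?thesis .
qed


lemma exp_tri:
  assumes "\<gamma> \<ge> 0" "x \<le> a + b"
  shows "exp (- \<gamma> * real a) * exp (- \<gamma> * real b) \<le> exp (- \<gamma> * real x)"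
proof -
  have "exp (- \<gamma> * real a) * exp (- \<gamma> * real b) = exp (- \<gamma> * (real a + real b))"
    by (simp add: exp_add[symmetric] algebra_simps)
  also have "\<dots> \<le> exp (- \<gamma> * real x)"
  proof -
    have "\<gamma> * real x \<le> \<gamma> * (real a + real b)" using assms by (intro mult_left_mono) auto
    then show ?thesis by simp
  qed
  finally show ?thesis .
qed

lemma M_bound:
  assumes A_SED: "SED N d ns ns A cA \<gamma>" and B_SED: "SED N d ns ms B cB \<gamma>"
    and K_SED: "SED N d ms ns K cK \<gamma>" and cB: "cB \<ge> 0" and cK: "cK \<ge> 0" and g: "\<gamma> \<ge> 0"
    and d_tri: "\<forall>j<N. \<forall>l<N. \<forall>h<N. d j l \<le> d j h + d h l"
    and l: "l < N" and j: "j < N"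
  shows "opnorm (blk ns l) (blk ns j) (\<lambda>r c. A r c + mmul (Idx N ms) B K r c)
          \<le> (cA + real N * cB * cK) * exp (- \<gamma> * real (d l j))"
proof -
  have "opnorm (blk ns l) (blk ns j) (\<lambda>r c. A r c + mmul (Idx N ms) B K r c)
     \<le> opnorm (blk ns l) (blk ns j) A + opnorm (blk ns l) (blk ns j) (mmul (Idx N ms) B K)"
    by (rule op_add) auto
  also have "\<dots> \<le> cA * exp (- \<gamma> * real (d l j)) +
      (\<Sum>h<N. opnorm (blk ns l) (blk ms h) B * opnorm (blk ms h) (blk ns j) K)"
    using A_SED l j unfolding SED_def by (intro add_mono op_mmul_blocks) auto
  also have "\<dots> \<le> cA * exp (- \<gamma> * real (d l j)) + (\<Sum>h<N. cB * cK * exp (- \<gamma> * real (d l j)))"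
  proof (intro add_left_mono sum_mono)
    fix h assume h: "h \<in> {..<N}"
    have "opnorm (blk ns l) (blk ms h) B * opnorm (blk ms h) (blk ns j) K
        \<le> (cB * exp (- \<gamma> * real (d l h))) * (cK * exp (- \<gamma> * real (d h j)))"
      using B_SED K_SED l j h unfolding SED_def by (intro mult_mono) (auto simp: op_nonneg cB)
    also have "\<dots> = cB * cK * (exp (- \<gamma> * real (d l h)) * exp (- \<gamma> * real (d h j)))" by simp
    also have "\<dots> \<le> cB * cK * exp (- \<gamma> * real (d l j))"
      using d_tri l j h g cB cK by (intro mult_left_mono exp_tri) auto
    finally show "opnorm (blk ns l) (blk ms h) B * opnorm (blk ms h) (blk ns j) K
        \<le> cB * cK * exp (- \<gamma> * real (d l j))" .
  qed
  also have "\<dots> = (cA + real N * cB * cK) * exp (- \<gamma> * real (d l j))" by (simp add: algebra_simps)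
  finally show ?thesis .
qed

lemma mmul_id: "c \<in> I \<Longrightarrow> finite I \<Longrightarrow> mmul I M (\<lambda>r c. if r = c then 1 else 0) r c = M r c"
  unfolding mmul_def by (simp add: sum.delta' if_distrib cong: if_cong)

lemma pw_bound:
  assumes Mb: "\<And>l j. l < N \<Longrightarrow> j < N \<Longrightarrow> opnorm (blk ns l) (blk ns j) M \<le> cM * exp (- \<gamma> * real (d l j))"
    and cM: "cM \<ge> 0" and g: "\<gamma> \<ge> 0"
    and d_tri: "\<forall>j<N. \<forall>l<N. \<forall>h<N. d j l \<le> d j h + d h l"
  shows "l < N \<Longrightarrow> j < N \<Longrightarrow> real N * opnorm (blk ns l) (blk ns j) (mpow (Idx N ns) M (Suc k))
           \<le> (real N * cM) ^ Suc k * exp (- \<gamma> * real (d l j))"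
proof (induction k arbitrary: l j)
  case 0
  have "opnorm (blk ns l) (blk ns j) (mpow (Idx N ns) M (Suc 0)) = opnorm (blk ns l) (blk ns j) M"
  proof (intro op_cong)
    fix r c assume "r \<in> blk ns l" "c \<in> blk ns j"
    then have "c \<in> Idx N ns" using 0 blk_sub[of j N ns] by auto
    then show "mpow (Idx N ns) M (Suc 0) r c = M r c" by (simp add: mmul_id)
  qed
  then show ?case using Mb[OF 0] 0 by (simp add: mult_left_mono mult.assoc)
next
  case (Suc k)
  have "opnorm (blk ns l) (blk ns j) (mpow (Idx N ns) M (Suc (Suc k)))
     \<le> (\<Sum>h<N. opnorm (blk ns l) (blk ns h) M * opnorm (blk ns h) (blk ns j) (mpow (Idx N ns) M (Suc k)))"
    by (simp only: mpow.simps(2)[of _ _ "Suc k"]) (rule op_mmul_blocks; simp)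
  also have "\<dots> \<le> (\<Sum>h<N. cM * ((real N * cM) ^ Suc k / real N) * exp (- \<gamma> * real (d l j)))"
  proof (rule sum_mono)
    fix h assume h: "h \<in> {..<N}"
    have N: "real N > 0" using Suc by simp
    have ih: "opnorm (blk ns h) (blk ns j) (mpow (Idx N ns) M (Suc k))
        \<le> (real N * cM) ^ Suc k / real N * exp (- \<gamma> * real (d h j))"
      using Suc.IH[of h j] h Suc N by (simp add: field_simps)
    have "opnorm (blk ns l) (blk ns h) M * opnorm (blk ns h) (blk ns j) (mpow (Idx N ns) M (Suc k))
       \<le> (cM * exp (- \<gamma> * real (d l h))) * ((real N * cM) ^ Suc k / real N * exp (- \<gamma> * real (d h j)))"
      using Mb[of l h] ih h Suc by (intro mult_mono) (auto simp: op_nonneg cM)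
    also have "\<dots> = cM * ((real N * cM) ^ Suc k / real N) * (exp (- \<gamma> * real (d l h)) * exp (- \<gamma> * real (d h j)))"
      by simp
    also have "\<dots> \<le> cM * ((real N * cM) ^ Suc k / real N) * exp (- \<gamma> * real (d l j))"
      using d_tri Suc h g cM by (intro mult_left_mono exp_tri) auto
    finally show "opnorm (blk ns l) (blk ns h) M * opnorm (blk ns h) (blk ns j) (mpow (Idx N ns) M (Suc k))
       \<le> cM * ((real N * cM) ^ Suc k / real N) * exp (- \<gamma> * real (d l j))" .
  qed
  also have "\<dots> = cM * (real N * cM) ^ Suc k * exp (- \<gamma> * real (d l j))"
    using Suc by simp
  finally show ?case
    using Suc by (simp add: mult_left_mono algebra_simps)
qed

lemma term_bound:
  assumes Xb: "\<And>a b. a < N \<Longrightarrow> b < N \<Longrightarrow> opnorm (blk ns a) (blk ns b) X \<le> \<beta> * exp (- \<gamma> * real (d a b))"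
    and Qb: "\<And>a b. a < N \<Longrightarrow> b < N \<Longrightarrow> opnorm (blk ns a) (blk ns b) Q \<le> q * exp (- \<gamma> * real (d i a + d i b))"
    and \<beta>: "\<beta> \<ge> 0" and q: "q \<ge> 0" and g: "\<gamma> \<ge> 0"
    and d_tri: "\<forall>j<N. \<forall>l<N. \<forall>h<N. d j l \<le> d j h + d h l"
    and i: "i < N" and l: "l < N" and j: "j < N"
  shows "opnorm (blk ns l) (blk ns j) (qf (Idx N ns) X Q)
     \<le> (real N)\<^sup>2 * \<beta>\<^sup>2 * q * exp (- \<gamma> * real (d i l + d i j))"
proof -
  let ?I = "Idx N ns"
  let ?E = "exp (- \<gamma> * real (d i l + d i j))"
  have inner: "opnorm (blk ns l) (blk ns b) (mmul ?I (mtr X) Q)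
      \<le> (\<Sum>a<N. \<beta> * q * exp (- \<gamma> * real (d i l)) * exp (- \<gamma> * real (d i b)))" if b: "b < N" for b
  proof -
    have "opnorm (blk ns l) (blk ns b) (mmul ?I (mtr X) Q)
       \<le> (\<Sum>a<N. opnorm (blk ns l) (blk ns a) (mtr X) * opnorm (blk ns a) (blk ns b) Q)"
      by (rule op_mmul_blocks) auto
    also have "\<dots> \<le> (\<Sum>a<N. \<beta> * q * exp (- \<gamma> * real (d i l)) * exp (- \<gamma> * real (d i b)))"
    proof (rule sum_mono)
      fix a assume a: "a \<in> {..<N}"
      have "opnorm (blk ns l) (blk ns a) (mtr X) * opnorm (blk ns a) (blk ns b) Q
          \<le> (\<beta> * exp (- \<gamma> * real (d a l))) * (q * exp (- \<gamma> * real (d i a + d i b)))"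
        using Xb[of a l] Qb[of a b] a l b op_mtr[of "blk ns a" "blk ns l" X]
        by (intro mult_mono) (auto simp: op_nonneg \<beta>)
      also have "\<dots> = \<beta> * q * (exp (- \<gamma> * real (d i a)) * exp (- \<gamma> * real (d a l))) * exp (- \<gamma> * real (d i b))"
        by (simp add: exp_add[symmetric] algebra_simps)
      also have "\<dots> \<le> \<beta> * q * exp (- \<gamma> * real (d i l)) * exp (- \<gamma> * real (d i b))"
        using d_tri i a l g \<beta> q by (intro mult_right_mono mult_left_mono exp_tri) auto
      finally show "opnorm (blk ns l) (blk ns a) (mtr X) * opnorm (blk ns a) (blk ns b) Q
          \<le> \<beta> * q * exp (- \<gamma> * real (d i l)) * exp (- \<gamma> * real (d i b))" .
    qed
    finally show ?thesis .
  qed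
  have "opnorm (blk ns l) (blk ns j) (qf ?I X Q) = opnorm (blk ns l) (blk ns j) (mmul ?I (mmul ?I (mtr X) Q) X)"
    by (simp add: qf_mmul)
  also have "\<dots> \<le> (\<Sum>b<N. opnorm (blk ns l) (blk ns b) (mmul ?I (mtr X) Q) * opnorm (blk ns b) (blk ns j) X)"
    by (rule op_mmul_blocks) auto
  also have "\<dots> \<le> (\<Sum>b<N. real N * (\<beta>\<^sup>2 * q * ?E))"
  proof (rule sum_mono)
    fix b assume b: "b \<in> {..<N}"
    have "opnorm (blk ns l) (blk ns b) (mmul ?I (mtr X) Q) * opnorm (blk ns b) (blk ns j) X
       \<le> (real N * (\<beta> * q * exp (- \<gamma> * real (d i l)) * exp (- \<gamma> * real (d i b)))) * (\<beta> * exp (- \<gamma> * real (d b j)))"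
      using inner[of b] Xb[of b j] b j by (intro mult_mono) (auto simp: op_nonneg \<beta> q)
    also have "\<dots> = real N * \<beta>\<^sup>2 * q * exp (- \<gamma> * real (d i l)) * (exp (- \<gamma> * real (d i b)) * exp (- \<gamma> * real (d b j)))"
      by (simp add: power2_eq_square algebra_simps)
    also have "\<dots> \<le> real N * \<beta>\<^sup>2 * q * exp (- \<gamma> * real (d i l)) * exp (- \<gamma> * real (d i j))"
      using d_tri i b j g \<beta> q by (intro mult_left_mono exp_tri) auto
    also have "\<dots> = real N * (\<beta>\<^sup>2 * q * ?E)"
      by (simp add: exp_add[symmetric] algebra_simps)
    finally show "opnorm (blk ns l) (blk ns b) (mmul ?I (mtr X) Q) * opnorm (blk ns b) (blk ns j) X
       \<le> real N * (\<beta>\<^sup>2 * q * ?E)" .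
  qed
  also have "\<dots> = (real N)\<^sup>2 * \<beta>\<^sup>2 * q * ?E" by (simp add: power2_eq_square)
  finally show ?thesis .
qed


lemma final_arith:
  fixes c \<rho> \<gamma> q T :: real and D :: nat
  assumes c1: "c \<ge> 1" and c2: "D > 0 \<Longrightarrow> c \<ge> 2" and \<rho>: "\<rho> > 0" and g: "\<gamma> > 0"
    and q: "q \<ge> 0" and T: "T \<ge> 0"
  defines "x \<equiv> \<gamma> * real D / (2 * (\<rho> + ln c))"
  defines "k0 \<equiv> nat \<lceil>x\<rceil>"
  shows "(\<Sum>k<k0. (c\<^sup>2) ^ k) * (q * exp (- \<gamma> * real D)) + T * exp (- 2 * \<rho> * real k0)
     \<le> (T + 2 * q) * exp (- (\<rho> * \<gamma> / (\<rho> + ln c)) * real D)"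
proof -
  define L where "L = ln c"
  have L: "L \<ge> 0" using c1 L_def by simp
  have pL: "\<rho> + L > 0" using L \<rho> by simp
  define E where "E = exp (- (\<rho> * \<gamma> / (\<rho> + L)) * real D)"
  have x0: "x \<ge> 0" using g pL by (simp add: x_def L_def[symmetric])
  have k0x: "real k0 \<ge> x" using x0 unfolding k0_def by linarith
  have k0x2: "real k0 - 1 \<le> x" using x0 ceiling_correct[of x] unfolding k0_def by linarith
  have tail: "T * exp (- 2 * \<rho> * real k0) \<le> T * E"
  proof (rule mult_left_mono[OF _ T])
    have "2 * \<rho> * x \<le> 2 * \<rho> * real k0" using k0x \<rho> by simp
    moreover have "2 * \<rho> * x = (\<rho> * \<gamma> / (\<rho> + L)) * real D"
      using pL by (simp add: x_def L_def[symmetric] field_simps)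
    ultimately show "exp (- 2 * \<rho> * real k0) \<le> E" unfolding E_def by simp
  qed
  have head: "(\<Sum>k<k0. (c\<^sup>2) ^ k) * (q * exp (- \<gamma> * real D)) \<le> 2 * q * E"
  proof (cases "k0 = 0")
    case True then show ?thesis using q by (simp add: E_def)
  next
    case False
    then have "x > 0" using k0x2 x0 unfolding k0_def by auto
    then have "D > 0" using x_def g pL L_def by (cases D) auto
    then have c: "c \<ge> 2" by (rule c2)
    have cc: "c\<^sup>2 \<ge> 4" using c power_mono[of 2 c 2] by simp
    have "(\<Sum>k<k0. (c\<^sup>2) ^ k) = ((c\<^sup>2) ^ k0 - 1) / (c\<^sup>2 - 1)"
      using cc by (subst geometric_sum) auto
    also have "\<dots> \<le> (c\<^sup>2) ^ k0 / (c\<^sup>2 - 1)" using cc by (intro divide_right_mono) auto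
    also have "\<dots> = (c\<^sup>2 / (c\<^sup>2 - 1)) * (c\<^sup>2) ^ (k0 - 1)"
      using False by (cases k0) auto
    also have "\<dots> \<le> 2 * exp (2 * x * L)"
    proof (rule mult_mono)
      show "c\<^sup>2 / (c\<^sup>2 - 1) \<le> 2" using cc by (simp add: field_simps)
      have "(c\<^sup>2) ^ (k0 - 1) = exp (real (k0 - 1) * (2 * L))"
      proof -
        have eL: "exp L = c" using c1 by (simp add: L_def)
        have e2: "exp (2*L) = c\<^sup>2" using exp_of_nat_mult[of 2 L] eL by simp
        show ?thesis by (simp only: exp_of_nat_mult e2)
      qed
      also have "\<dots> \<le> exp (2 * x * L)"
        using k0x2 False L by (simp add: of_nat_diff mult_right_mono)
      finally show "(c\<^sup>2) ^ (k0 - 1) \<le> exp (2 * x * L)" .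
    qed auto
    finally have s: "(\<Sum>k<k0. (c\<^sup>2) ^ k) \<le> 2 * exp (2 * x * L)" .
    have "(\<Sum>k<k0. (c\<^sup>2) ^ k) * (q * exp (- \<gamma> * real D)) \<le> 2 * exp (2 * x * L) * (q * exp (- \<gamma> * real D))"
      using s q by (intro mult_right_mono) auto
    also have "\<dots> = 2 * q * exp (2 * x * L - \<gamma> * real D)" by (simp add: exp_diff exp_minus field_simps)
    also have "2 * x * L - \<gamma> * real D = - (\<rho> * \<gamma> / (\<rho> + L)) * real D"
      using pL by (simp add: x_def L_def[symmetric] field_simps)
    finally show ?thesis unfolding E_def .
  qed
  have "(T + 2*q) * exp (- (\<rho> * \<gamma> / (\<rho> + ln c)) * real D) = T*E + 2*q*E"
    unfolding E_def L_def by (simp only: distrib_right)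
  then show ?thesis using head tail by linarith
qed


lemma KRK_qf: "KRK ms i K R = qf (blk ms i) K R"
  unfolding KRK_def qf_def by simp

lemma Q_bound:
  assumes K_SED: "SED N d ms ns K cK \<gamma>" and cK: "cK \<ge> 0" and g: "\<gamma> \<ge> 0"
    and d_refl: "\<forall>j<N. d j j = 0" and i: "i < N" and a: "a < N" and b: "b < N"
  shows "opnorm (blk ns a) (blk ns b) (\<lambda>r c. Sblock S i r c + KRK ms i K R r c)
     \<le> (opnorm (blk ns i) (blk ns i) S + opnorm (blk ms i) (blk ms i) R * cK\<^sup>2) * exp (- \<gamma> * real (d i a + d i b))"
proof -
  let ?E = "exp (- \<gamma> * real (d i a + d i b))"
  have "opnorm (blk ns a) (blk ns b) (\<lambda>r c. Sblock S i r c + KRK ms i K R r c)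
     \<le> opnorm (blk ns a) (blk ns b) (Sblock S i) + opnorm (blk ns a) (blk ns b) (KRK ms i K R)"
    by (rule op_add) auto
  also have "\<dots> \<le> opnorm (blk ns i) (blk ns i) S * ?E + opnorm (blk ms i) (blk ms i) R * cK\<^sup>2 * ?E"
  proof (rule add_mono)
    show "opnorm (blk ns a) (blk ns b) (Sblock S i) \<le> opnorm (blk ns i) (blk ns i) S * ?E"
    proof (cases "a = i \<and> b = i")
      case True
      have "opnorm (blk ns i) (blk ns i) (Sblock S i) = opnorm (blk ns i) (blk ns i) S"
        by (rule op_cong) (auto simp: Sblock_def blk_def)
      then show ?thesis using True d_refl i by simp
    next
      case False
      then have "opnorm (blk ns a) (blk ns b) (Sblock S i) = opnorm (blk ns a) (blk ns b) (\<lambda>r c. 0)"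
        by (intro op_cong) (auto simp: Sblock_def blk_def)
      also have "\<dots> \<le> 0" by (rule op_zero)
      also have "0 \<le> opnorm (blk ns i) (blk ns i) S * ?E" by (simp add: op_nonneg)
      finally show ?thesis .
    qed
    have "opnorm (blk ns a) (blk ns b) (KRK ms i K R)
       \<le> opnorm (blk ms i) (blk ns a) K * opnorm (blk ms i) (blk ms i) R * opnorm (blk ms i) (blk ns b) K"
      unfolding KRK_qf by (rule op_qf) auto
    also have "\<dots> \<le> (cK * exp (- \<gamma> * real (d i a))) * opnorm (blk ms i) (blk ms i) R * (cK * exp (- \<gamma> * real (d i b)))"
      using K_SED i a b unfolding SED_def
      by (intro mult_mono) (auto simp: op_nonneg cK)
    also have "\<dots> = opnorm (blk ms i) (blk ms i) R * cK\<^sup>2 * ?E"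
      by (simp add: power2_eq_square exp_add[symmetric] algebra_simps)
    finally show "opnorm (blk ns a) (blk ns b) (KRK ms i K R) \<le> opnorm (blk ms i) (blk ms i) R * cK\<^sup>2 * ?E" .
  qed
  also have "\<dots> = (opnorm (blk ns i) (blk ns i) S + opnorm (blk ms i) (blk ms i) R * cK\<^sup>2) * ?E"
    by (simp add: algebra_simps)
  finally show ?thesis .
qed

lemma pw_qf:
  assumes fin: "finite I" and stab: "\<And>k. opnorm I I (mpow I M k) \<le> \<tau> * exp (- \<rho> * real k)"
  shows "opnorm I I (qf I (mpow I M n) Y) \<le> \<tau>\<^sup>2 * exp (- 2 * \<rho> * real n) * opnorm I I Y"
proof -
  have "opnorm I I (qf I (mpow I M n) Y) \<le> opnorm I I (mpow I M n) * opnorm I I Y * opnorm I I (mpow I M n)"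
    by (rule op_qf[OF fin fin fin])
  also have "\<dots> \<le> (\<tau> * exp (- \<rho> * real n)) * opnorm I I Y * (\<tau> * exp (- \<rho> * real n))"
  proof -
    have n0: "0 \<le> opnorm I I (mpow I M n)" using fin by (simp add: op_nonneg)
    have te: "0 \<le> \<tau> * exp (- \<rho> * real n)" using n0 stab[of n] by linarith
    show ?thesis using stab[of n] fin n0 te
      by (intro mult_mono) (auto simp: op_nonneg)
  qed
  also have "\<dots> = \<tau>\<^sup>2 * exp (- 2 * \<rho> * real n) * opnorm I I Y"
    by (simp add: power2_eq_square exp_add[symmetric] algebra_simps)
  finally show ?thesis .
qed

lemma tail:
  assumes fin: "finite I"
    and lyap: "\<And>r c. r \<in> I \<Longrightarrow> c \<in> I \<Longrightarrow> P r c = Q r c + qf I M P r c"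
    and stab: "\<And>k. opnorm I I (mpow I M k) \<le> \<tau> * exp (- \<rho> * real k)" and \<rho>: "\<rho> > 0"
  shows "opnorm I I (qf I (mpow I M k0) P) \<le> opnorm I I Q * \<tau>\<^sup>2 / (1 - exp (- 2 * \<rho>)) * exp (- 2 * \<rho> * real k0)"
proof -
  define r where "r = exp (- 2 * \<rho>)"
  have r0: "0 \<le> r" and r1: "r < 1" using \<rho> by (auto simp: r_def)
  have er: "exp (- 2 * \<rho> * real n) = r ^ n" for n
  proof -
    have "exp (real n * (-2*\<rho>)) = exp (-2*\<rho>) ^ n" by (rule exp_of_nat_mult)
    moreover have "real n * (-2*\<rho>) = - 2 * \<rho> * real n" by simp
    ultimately show ?thesis unfolding r_def by (metis)
  qed
  let ?b = "opnorm I I Q * \<tau>\<^sup>2 / (1 - r) * r ^ k0"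
  let ?C = "\<tau>\<^sup>2 * opnorm I I P * r ^ k0"
  have bound: "opnorm I I (qf I (mpow I M k0) P) \<le> ?b + ?C * r ^ K" for K
  proof -
    have eq: "qf I (mpow I M k0) P = (\<lambda>r c. (\<Sum>k<K. qf I (mpow I M (k + k0)) Q r c) + qf I (mpow I M (K + k0)) P r c)"
      using lyap_iter[of I P Q M "mpow I M k0" K] lyap by (simp add: mpow_funpow)
    have "opnorm I I (qf I (mpow I M k0) P)
       \<le> opnorm I I (\<lambda>r c. \<Sum>k<K. qf I (mpow I M (k + k0)) Q r c) + opnorm I I (qf I (mpow I M (K + k0)) P)"
      unfolding eq by (rule op_add[OF fin fin])
    also have "\<dots> \<le> (\<Sum>k<K. opnorm I I (qf I (mpow I M (k + k0)) Q)) + opnorm I I (qf I (mpow I M (K + k0)) P)"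
      using fin by (intro add_right_mono op_sum) auto
    also have "\<dots> \<le> (\<Sum>k<K. \<tau>\<^sup>2 * exp (- 2 * \<rho> * real (k + k0)) * opnorm I I Q)
        + \<tau>\<^sup>2 * exp (- 2 * \<rho> * real (K + k0)) * opnorm I I P"
      using fin stab by (intro add_mono sum_mono pw_qf) auto
    also have "\<dots> = (\<tau>\<^sup>2 * opnorm I I Q * r ^ k0) * (\<Sum>k<K. r ^ k) + ?C * r ^ K"
      by (simp only: er) (simp add: power_add sum_distrib_left sum_distrib_right algebra_simps)
    also have "\<dots> \<le> (\<tau>\<^sup>2 * opnorm I I Q * r ^ k0) * (1 / (1 - r)) + ?C * r ^ K"
    proof -
      have "(\<Sum>k<K. r ^ k) = (1 - r ^ K) / (1 - r)" using r1 by (simp add: sum_gp_strict)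
      also have "\<dots> \<le> 1 / (1 - r)" using r0 r1 by (intro divide_right_mono) auto
      finally have "(\<Sum>k<K. r ^ k) \<le> 1 / (1 - r)" .
      then show ?thesis using fin r0 by (intro add_right_mono mult_left_mono) (auto simp: op_nonneg)
    qed
    also have "\<dots> = ?b + ?C * r ^ K" by simp
    finally show ?thesis .
  qed
  have lim: "(\<lambda>K. ?b + ?C * r ^ K) \<longlonglongrightarrow> ?b + ?C * 0"
    using r0 r1 by (intro tendsto_intros LIMSEQ_power_zero) auto
  have "opnorm I I (qf I (mpow I M k0) P) \<le> ?b"
    using LIMSEQ_le_const[OF lim] bound by auto
  then show ?thesis by (simp only: er[of k0] r_def[symmetric])
qed

theorem theorem1:
  fixes N :: nat and d :: "nat \<Rightarrow> nat \<Rightarrow> nat"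
    and ns ms :: "nat \<Rightarrow> nat"
    and A B K S R P :: gmat
    and cA cB cK \<gamma> \<kappa> \<tau> \<rho> :: real and i :: nat
  assumes d_refl: "\<forall>j<N. d j j = 0"
    and d_sym: "\<forall>j<N. \<forall>l<N. d j l = d l j"
    and d_tri: "\<forall>j<N. \<forall>l<N. \<forall>h<N. d j l \<le> d j h + d h l"
    and S_diag: "block_diag S" and S_psd: "\<forall>j<N. psd_on (blk ns j) S"
    and R_diag: "block_diag R" and R_pd: "\<forall>j<N. pd_on (blk ms j) R"
    and A_SED: "SED N d ns ns A cA \<gamma>"
    and B_SED: "SED N d ns ms B cB \<gamma>"
    and \<gamma>_pos: "\<gamma> > 0" and cA: "cA \<ge> 1" and cB: "cB \<ge> 1"
    and \<kappa>: "\<kappa> \<ge> 1"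
    and K_loc: "local_K N d ns ms \<kappa> K"
    and K_SED: "SED N d ms ns K cK \<gamma>"
    and stab: "stable (Idx N ns) (\<lambda>r c. A r c + mmul (Idx N ms) B K r c) \<tau> \<rho>"
    and i: "i < N"
    and lyap: "\<forall>r\<in>Idx N ns. \<forall>c\<in>Idx N ns.
       P r c = Sblock S i r c + KRK ms i K R r c
             + (\<Sum>k\<in>Idx N ns. \<Sum>l\<in>Idx N ns.
                  (A k r + mmul (Idx N ms) B K k r) * P k l * (A l c + mmul (Idx N ms) B K l c))"
  shows "SED_away N d ns ns i P
     (opnorm (Idx N ns) (Idx N ns) (\<lambda>r c. Sblock S i r c + KRK ms i K R r c) * \<tau>\<^sup>2
         / (1 - exp (- 2 * \<rho>))
      + 2 * (opnorm (blk ns i) (blk ns i) S + opnorm (blk ms i) (blk ms i) R * cK\<^sup>2))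
     (\<rho> * \<gamma> / (\<rho> + ln (real N * cA + (real N)\<^sup>2 * cB * cK)))"
proof -
  let ?In = "Idx N ns"
  define M where "M = (\<lambda>r c. A r c + mmul (Idx N ms) B K r c)"
  define Q where "Q = (\<lambda>r c. Sblock S i r c + KRK ms i K R r c)"
  have \<tau>1: "\<tau> \<ge> 1" and \<rho>: "\<rho> > 0" and stabk: "\<And>k. opnorm ?In ?In (mpow ?In M k) \<le> \<tau> * exp (- \<rho> * real k)"
    using stab unfolding stable_def M_def by auto
  have lyap': "P r c = Q r c + qf ?In M P r c" if "r \<in> ?In" "c \<in> ?In" for r c
    using lyap that unfolding Q_def M_def qf_def by simp
  have g0: "\<gamma> \<ge> 0" using \<gamma>_pos by simp
  have cK0: "cK \<ge> 0"
  proof -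
    have "0 \<le> opnorm (blk ms i) (blk ns i) K" by (simp add: op_nonneg)
    also have "\<dots> \<le> cK * exp (- \<gamma> * real (d i i))" using K_SED i unfolding SED_def by auto
    finally show ?thesis using d_refl i by simp
  qed
  define cM where "cM = cA + real N * cB * cK"
  define c where "c = real N * cM"
  have N1: "real N \<ge> 1" using i by simp
  have cM1: "cM \<ge> 1" proof -
    have "real N * cB * cK \<ge> 0" using cB cK0 by simp
    then show ?thesis unfolding cM_def using cA by linarith
  qed
  have c_eq: "c = real N * cA + (real N)\<^sup>2 * cB * cK" unfolding c_def cM_def by (simp add: power2_eq_square algebra_simps)
  have c1: "c \<ge> 1" unfolding c_def using N1 cM1 by (metis mult_mono' mult_1 zero_le_one)
  have Mb: "opnorm (blk ns l) (blk ns j) M \<le> cM * exp (- \<gamma> * real (d l j))" if "l < N" "j < N" for l j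
    unfolding M_def cM_def using M_bound[OF A_SED B_SED K_SED _ cK0 g0 d_tri that] cB by simp
  define q where "q = opnorm (blk ns i) (blk ns i) S + opnorm (blk ms i) (blk ms i) R * cK\<^sup>2"
  have q0: "q \<ge> 0" unfolding q_def by (simp add: op_nonneg)
  have Qb: "opnorm (blk ns a) (blk ns b) Q \<le> q * exp (- \<gamma> * real (d i a + d i b))" if "a < N" "b < N" for a b
    unfolding Q_def q_def using Q_bound[OF K_SED cK0 g0 d_refl i that] .
  have termb: "opnorm (blk ns l) (blk ns j) (qf ?In (mpow ?In M k) Q) \<le> (c\<^sup>2) ^ k * q * exp (- \<gamma> * real (d i l + d i j))"
    if l: "l < N" and j: "j < N" for k l j
  proof (cases k)
    case 0
    have "opnorm (blk ns l) (blk ns j) (qf ?In (mpow ?In M k) Q) = opnorm (blk ns l) (blk ns j) Q"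
    proof (rule op_cong)
      fix r c assume "r \<in> blk ns l" "c \<in> blk ns j"
      then have "r \<in> ?In" "c \<in> ?In" using blk_sub[OF l] blk_sub[OF j] by auto
      then show "qf ?In (mpow ?In M k) Q r c = Q r c" using 0 qf_id by simp
    qed
    then show ?thesis using Qb[OF l j] 0 by simp
  next
    case (Suc k')
    define \<beta> where "\<beta> = c ^ k / real N"
    have \<beta>0: "\<beta> \<ge> 0" unfolding \<beta>_def using c1 by simp
    have Xb: "opnorm (blk ns a) (blk ns b) (mpow ?In M k) \<le> \<beta> * exp (- \<gamma> * real (d a b))"
      if "a < N" "b < N" for a b
    proof -
      have "real N * opnorm (blk ns a) (blk ns b) (mpow ?In M k) \<le> c ^ k * exp (- \<gamma> * real (d a b))"
        unfolding Suc c_def using pw_bound[OF Mb _ g0 d_tri, of a b k'] that cM1 by simp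
      then show ?thesis unfolding \<beta>_def using N1 by (simp add: field_simps)
    qed
    have "opnorm (blk ns l) (blk ns j) (qf ?In (mpow ?In M k) Q) \<le> (real N)\<^sup>2 * \<beta>\<^sup>2 * q * exp (- \<gamma> * real (d i l + d i j))"
      by (rule term_bound[OF Xb Qb \<beta>0 q0 g0 d_tri i l j])
    also have "(real N)\<^sup>2 * \<beta>\<^sup>2 = (c\<^sup>2) ^ k" unfolding \<beta>_def using N1
      by (simp add: power_divide power_mult_distrib flip: power_mult) (simp add: mult.commute)
    finally show ?thesis .
  qed
  define T where "T = opnorm ?In ?In Q * \<tau>\<^sup>2 / (1 - exp (- 2 * \<rho>))"
  have T0: "T \<ge> 0" unfolding T_def using \<rho> by (simp add: op_nonneg)
  show ?thesis
    unfolding SED_away_def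
  proof (intro allI impI)
    fix l j assume l: "l < N" and j: "j < N"
    define D where "D = max (d i l) (d i j)"
    define x where "x = \<gamma> * real D / (2 * (\<rho> + ln c))"
    define k0 where "k0 = nat \<lceil>x\<rceil>"
    have Pdec: "P r c = (\<Sum>k<k0. qf ?In (mpow ?In M k) Q r c) + qf ?In (mpow ?In M k0) P r c"
      if "r \<in> ?In" "c \<in> ?In" for r c
    proof -
      have "P r c = qf ?In (mpow ?In M 0) P r c" using qf_id[OF finite_Idx that] by simp
      also have "\<dots> = (\<Sum>k<k0. qf ?In (mpow ?In M k) Q r c) + qf ?In (mpow ?In M k0) P r c"
      proof -
        have fp: "(mmul ?In M ^^ k) (mpow ?In M 0) = mpow ?In M k" for k
          using mpow_funpow[where j=0 and I="?In" and M=M and k=k] by simp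
        show ?thesis by (subst lyap_iter[of ?In P Q M _ k0, OF lyap']) (simp_all only: fp)
      qed
      finally show ?thesis .
    qed
    have "opnorm (blk ns l) (blk ns j) P
        = opnorm (blk ns l) (blk ns j) (\<lambda>r c. (\<Sum>k<k0. qf ?In (mpow ?In M k) Q r c) + qf ?In (mpow ?In M k0) P r c)"
    proof (rule op_cong)
      fix r c assume "r \<in> blk ns l" "c \<in> blk ns j"
      then have "r \<in> ?In" "c \<in> ?In" using blk_sub[OF l] blk_sub[OF j] by auto
      then show "P r c = (\<Sum>k<k0. qf ?In (mpow ?In M k) Q r c) + qf ?In (mpow ?In M k0) P r c" by (rule Pdec)
    qed
    also have "\<dots> \<le> opnorm (blk ns l) (blk ns j) (\<lambda>r c. \<Sum>k<k0. qf ?In (mpow ?In M k) Q r c)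
        + opnorm (blk ns l) (blk ns j) (qf ?In (mpow ?In M k0) P)"
      by (rule op_add) auto
    also have "\<dots> \<le> (\<Sum>k<k0. opnorm (blk ns l) (blk ns j) (qf ?In (mpow ?In M k) Q))
        + opnorm ?In ?In (qf ?In (mpow ?In M k0) P)"
      by (intro add_mono op_sum op_mono_sets blk_sub l j) auto
    also have "\<dots> \<le> (\<Sum>k<k0. (c\<^sup>2) ^ k * q * exp (- \<gamma> * real (d i l + d i j))) + T * exp (- 2 * \<rho> * real k0)"
      unfolding T_def
      by (intro add_mono sum_mono termb l j tail[OF finite_Idx lyap' stabk \<rho>]) auto
    also have "\<dots> \<le> (\<Sum>k<k0. (c\<^sup>2) ^ k) * (q * exp (- \<gamma> * real D)) + T * exp (- 2 * \<rho> * real k0)"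
    proof -
      have "exp (- \<gamma> * real (d i l + d i j)) \<le> exp (- \<gamma> * real D)"
        unfolding D_def using g0 by (simp add: mult_left_mono)
      then have "(c\<^sup>2) ^ k * q * exp (- \<gamma> * real (d i l + d i j)) \<le> (c\<^sup>2) ^ k * (q * exp (- \<gamma> * real D))" for k
        using q0 c1 by (simp add: mult_left_mono)
      then show ?thesis by (simp add: sum_distrib_right sum_mono)
    qed
    also have "\<dots> \<le> (T + 2 * q) * exp (- (\<rho> * \<gamma> / (\<rho> + ln c)) * real D)"
    proof -
      have "c \<ge> 2" if "D > 0"
      proof -
        have "N \<ge> 2"
        proof (rule ccontr)
          assume "\<not> N \<ge> 2"
          then have "l = i" "j = i" using i l j by auto
          then show False using that d_refl i by (simp add: D_def)
        qed
        then have "real N \<ge> 2" by simp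
        then show ?thesis unfolding c_def using cM1 by (metis mult_mono' mult.right_neutral le_numeral_extra(1) order_trans zero_le_numeral)
      qed
      then show ?thesis unfolding x_def k0_def using final_arith[OF c1 _ \<rho> \<gamma>_pos q0 T0, of D] by simp
    qed
    finally show "opnorm (blk ns l) (blk ns j) P
         \<le> (opnorm (Idx N ns) (Idx N ns) (\<lambda>r c. Sblock S i r c + KRK ms i K R r c) * \<tau>\<^sup>2 / (1 - exp (- 2 * \<rho>)) +
            2 * (opnorm (blk ns i) (blk ns i) S + opnorm (blk ms i) (blk ms i) R * cK\<^sup>2)) *
           exp (- (\<rho> * \<gamma> / (\<rho> + ln (real N * cA + (real N)\<^sup>2 * cB * cK))) * real (max (d i l) (d i j)))"
      unfolding T_def Q_def q_def D_def c_eq .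
  qed
qed

end
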